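(* Let $V_0\in\mathcal{X}^1$ and $w\in H^1(\mathbb{R};\mathbb{C})$. Then $V_0+w\in\mathcal{X}^1$ and $$[p](V_0+w)=[p](V_0)+\frac12\int_\mathbb{R}\langle iw,w'\rangle+\int_\mathbb{R}\langle iw,V_0'\rangle\bmod\pi.$$
   Context: $\mathcal{X}^1=\{w\in L^\infty(\mathbb{R};\mathbb{C}):\ w'\in L^2,\ 1-|w|^2\in L^2\}$. $\langle a,b\rangle=\mathrm{Re}(a\bar b)$. For $v\in\mathcal{X}^1$, $|v(x)|\to1$ at infinity and the untwisted momentum is $[p](v)=\lim_{R\to\infty}\big(\frac12\int_{-R}^R\langle iv,v'\rangle-\frac12(\arg v(R)-\arg v(-R))\big)\in\mathbb{R}/\pi\mathbb{Z}$ (the limit exists). *)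

theory Defs
  imports "HOL-Analysis.Analysis"
begin

definition cinner :: "complex \<Rightarrow> complex \<Rightarrow> real" where
  "cinner a b = Re (a * cnj b)"

definition L2 :: "(real \<Rightarrow> 'a::{banach,second_countable_topology}) \<Rightarrow> bool" where
  "L2 f \<longleftrightarrow> f \<in> borel_measurable lborel \<and> integrable lborel (\<lambda>x. (norm (f x))\<^sup>2)"

text \<open>Weak derivative of a (continuous representative) function on R: g is locally
  integrable and v is its indefinite integral (absolutely continuous representative).\<close>
definition weak_deriv :: "(real \<Rightarrow> complex) \<Rightarrow> (real \<Rightarrow> complex) \<Rightarrow> bool" where
  "weak_deriv v g \<longleftrightarrow> g \<in> borel_measurable lborel \<and>
     (\<forall>a b. a \<le> b \<longrightarrow> set_integrable lborel {a..b} g \<and>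
         v b - v a = (LINT t:{a..b}|lborel. g t))"

definition X1 :: "(real \<Rightarrow> complex) \<Rightarrow> bool" where
  "X1 v \<longleftrightarrow> bounded (range v) \<and> (\<exists>g. weak_deriv v g \<and> L2 g) \<and>
     L2 (\<lambda>x. 1 - (norm (v x))\<^sup>2)"

definition H1 :: "(real \<Rightarrow> complex) \<Rightarrow> bool" where
  "H1 w \<longleftrightarrow> L2 w \<and> (\<exists>g. weak_deriv w g \<and> L2 g)"

definition pR :: "(real \<Rightarrow> complex) \<Rightarrow> (real \<Rightarrow> complex) \<Rightarrow> real \<Rightarrow> real" where
  "pR v g R = (1/2) * (LINT x:{-R..R}|lborel. cinner (\<i> * v x) (g x))
               - (1/2) * (Arg (v R) - Arg (v (-R)))"

text \<open>Convergence in R/(pi Z) as R \<rightarrow> \<infinity>, via the homeomorphism R/(pi Z) \<cong> S^1, x \<mapsto> exp(2ix).\<close>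
definition momentum_is :: "(real \<Rightarrow> complex) \<Rightarrow> (real \<Rightarrow> complex) \<Rightarrow> real \<Rightarrow> bool" where
  "momentum_is v g p \<longleftrightarrow> ((\<lambda>R. cis (2 * pR v g R)) \<longlongrightarrow> cis (2 * p)) at_top"

end

theory Submission
  imports Defs
begin



lemma wd_D:
  assumes "weak_deriv v g" "a \<le> b"
  shows "integrable lborel (\<lambda>t. indicator {a..b} t *\<^sub>R g t)"
    "v b - v a = (\<integral>t. indicator {a..b} t *\<^sub>R g t \<partial>lborel)"
  using assms unfolding weak_deriv_def set_integrable_def set_lebesgue_integral_def by auto

lemma wd_meas: "weak_deriv v g \<Longrightarrow> g \<in> borel_measurable lborel"
  unfolding weak_deriv_def by auto

lemma wd_henstock:
  assumes "weak_deriv v g" "a \<le> b"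
  shows "g integrable_on {a..b}" "v b - v a = integral {a..b} g"
proof -
  have si: "set_integrable lborel {a..b} g" using assms unfolding weak_deriv_def by auto
  show "g integrable_on {a..b}" using set_borel_integral_eq_integral(1)[OF si] .
  show "v b - v a = integral {a..b} g" using assms set_borel_integral_eq_integral(2)[OF si]
    unfolding weak_deriv_def by auto
qed

lemma wd_cont_on:
  assumes "weak_deriv v g"
  shows "continuous_on {a..b} v"
proof (cases "a \<le> b")
  case True
  have "continuous_on {a..b} (\<lambda>x. v a + integral {a..x} g)"
    by (intro continuous_intros indefinite_integral_continuous_1 wd_henstock[OF assms True])
  moreover have "\<And>x. x \<in> {a..b} \<Longrightarrow> v a + integral {a..x} g = v x"
    using wd_henstock(2)[OF assms] by (metis atLeastAtMost_iff add.commute diff_add_cancel)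
  ultimately show ?thesis by (metis (no_types, lifting) continuous_on_cong)
next
  case False then show ?thesis by simp
qed

lemma wd_isCont:
  assumes "weak_deriv v g"
  shows "isCont v x"
proof -
  have "continuous_on {x-1..x+1} v" by (rule wd_cont_on[OF assms])
  then show ?thesis
    by (rule continuous_on_interior) (auto simp: interior_atLeastAtMost_real)
qed

lemma wd_cont: "weak_deriv v g \<Longrightarrow> continuous_on UNIV v"
  by (simp add: continuous_at_imp_continuous_on wd_isCont)

lemma wd_borel: "weak_deriv v g \<Longrightarrow> v \<in> borel_measurable borel"
  using wd_cont borel_measurable_continuous_onI by blast




lemma ae_zero_real:
  fixes h :: "real \<Rightarrow> real"
  assumes hm[measurable]: "h \<in> borel_measurable lborel"
  and int: "\<And>a b. a \<le> b \<Longrightarrow> integrable lborel (\<lambda>x. indicator {a..b} x * h x)"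
  and z: "\<And>a b. a \<le> b \<Longrightarrow> (\<integral>x. indicator {a..b} x * h x \<partial>lborel) = 0"
  shows "AE x in lborel. h x = 0"
proof -
  have "AE x in lborel. x \<in> {-real n..real n} \<longrightarrow> h x = 0" for n :: nat
  proof -
    define H where "H x = indicator {-real n..real n} x * h x" for x
    have Hint: "integrable lborel H" unfolding H_def by (rule int) simp
    have Hm[measurable]: "H \<in> borel_measurable lborel" using Hint by auto
    define p where "p x = max 0 (H x)" for x
    define q where "q x = max 0 (- H x)" for x
    have pm[measurable]: "p \<in> borel_measurable lborel" unfolding p_def by measurable
    have qm[measurable]: "q \<in> borel_measurable lborel" unfolding q_def by measurable
    have pint: "integrable lborel p"
      by (rule Bochner_Integration.integrable_bound[OF Hint]) (auto simp: p_def)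
    have qint: "integrable lborel q"
      by (rule Bochner_Integration.integrable_bound[OF Hint]) (auto simp: q_def)
    have key: "(\<integral>x. indicator {c<..} x * H x \<partial>lborel) = 0" for c
    proof (cases "c \<le> real n")
      case True
      have "AE x in lborel. indicator {c<..} x * H x = indicator {max c (-real n)..real n} x * h x"
        using AE_lborel_singleton[of c]
        by eventually_elim (auto simp: H_def indicator_def)
      then have "(\<integral>x. indicator {c<..} x * H x \<partial>lborel) = (\<integral>x. indicator {max c (-real n)..real n} x * h x \<partial>lborel)"
        by (rule integral_cong_AE[rotated 2]) auto
      also have "\<dots> = 0" using True by (intro z) auto
      finally show ?thesis .
    next
      case False
      then have "(\<lambda>x. indicator {c<..} x * H x) = (\<lambda>x. 0)" by (auto simp: H_def indicator_def)
      then show ?thesis by simp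
    qed
    have pqi: "integrable lborel (\<lambda>x. indicator {c<..} x * p x)" "integrable lborel (\<lambda>x. indicator {c<..} x * q x)" for c
      using integrable_mult_indicator[of "{c<..}" lborel p] integrable_mult_indicator[of "{c<..}" lborel q] pint qint
      by auto
    have pq: "(\<integral>x. indicator {c<..} x * p x \<partial>lborel) = (\<integral>x. indicator {c<..} x * q x \<partial>lborel)" for c
    proof -
      have "(\<integral>x. indicator {c<..} x * p x \<partial>lborel) - (\<integral>x. indicator {c<..} x * q x \<partial>lborel)
          = (\<integral>x. indicator {c<..} x * p x - indicator {c<..} x * q x \<partial>lborel)"
        using pqi by (rule Bochner_Integration.integral_diff[symmetric])
      also have "\<dots> = (\<integral>x. indicator {c<..} x * H x \<partial>lborel)"
        by (rule Bochner_Integration.integral_cong) (auto simp: p_def q_def max_def algebra_simps)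
      finally show ?thesis using key by simp
    qed
    have emp: "emeasure (density lborel (\<lambda>x. ennreal (p x))) {c<..} = ennreal (\<integral>x. indicator {c<..} x * p x \<partial>lborel)" for c
    proof -
      have "emeasure (density lborel (\<lambda>x. ennreal (p x))) {c<..} = (\<integral>\<^sup>+x. ennreal (p x) * indicator {c<..} x \<partial>lborel)"
        by (rule emeasure_density) auto
      also have "\<dots> = (\<integral>\<^sup>+x. ennreal (indicator {c<..} x * p x) \<partial>lborel)"
        by (rule nn_integral_cong) (auto simp: indicator_def)
      also have "\<dots> = ennreal (\<integral>x. indicator {c<..} x * p x \<partial>lborel)"
        by (rule nn_integral_eq_integral[OF pqi(1)]) (auto simp: p_def)
      finally show ?thesis .
    qed
    have emq: "emeasure (density lborel (\<lambda>x. ennreal (q x))) {c<..} = ennreal (\<integral>x. indicator {c<..} x * q x \<partial>lborel)" for c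
    proof -
      have "emeasure (density lborel (\<lambda>x. ennreal (q x))) {c<..} = (\<integral>\<^sup>+x. ennreal (q x) * indicator {c<..} x \<partial>lborel)"
        by (rule emeasure_density) auto
      also have "\<dots> = (\<integral>\<^sup>+x. ennreal (indicator {c<..} x * q x) \<partial>lborel)"
        by (rule nn_integral_cong) (auto simp: indicator_def)
      also have "\<dots> = ennreal (\<integral>x. indicator {c<..} x * q x \<partial>lborel)"
        by (rule nn_integral_eq_integral[OF pqi(2)]) (auto simp: q_def)
      finally show ?thesis .
    qed
    have "density lborel (\<lambda>x. ennreal (p x)) = density lborel (\<lambda>x. ennreal (q x))"
      by (rule measure_eqI_lessThan) (auto simp: emp emq pq)
    moreover have "(\<integral>\<^sup>+x. ennreal (p x) \<partial>lborel) \<noteq> \<infinity>"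
      using nn_integral_eq_integral[OF pint] by (auto simp: p_def)
    ultimately have "AE x in lborel. ennreal (p x) = ennreal (q x)"
      by (subst (asm) finite_density_unique) auto
    then show ?thesis
    proof eventually_elim
      case (elim x)
      then have "p x = q x" by (simp add: p_def q_def)
      then show ?case by (auto simp: p_def q_def H_def max_def split: if_splits)
    qed
  qed
  then have "AE x in lborel. \<forall>n::nat. x \<in> {-real n..real n} \<longrightarrow> h x = 0"
    by (subst AE_all_countable) auto
  then show ?thesis
  proof eventually_elim
    case (elim x)
    obtain n :: nat where "\<bar>x\<bar> \<le> real n" using real_arch_simple by blast
    then have "x \<in> {-real n..real n}" by auto
    then show ?case using elim by blast
  qed
qed

lemma wd_unique:
  assumes "weak_deriv v g1" "weak_deriv v g2"
  shows "AE x in lborel. g1 x = g2 x"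
proof -
  have m1[measurable]: "g1 \<in> borel_measurable lborel" and m2[measurable]: "g2 \<in> borel_measurable lborel"
    using assms by (auto simp: weak_deriv_def)
  have I: "integrable lborel (\<lambda>x. indicator {a..b} x *\<^sub>R g1 x - indicator {a..b} x *\<^sub>R g2 x)" if "a \<le> b" for a b
    using wd_D(1)[OF assms(1) that] wd_D(1)[OF assms(2) that] by auto
  have Z: "(\<integral>x. indicator {a..b} x *\<^sub>R g1 x - indicator {a..b} x *\<^sub>R g2 x \<partial>lborel) = 0" if "a \<le> b" for a b
    using wd_D[OF assms(1) that] wd_D[OF assms(2) that]
    by (subst Bochner_Integration.integral_diff) auto
  have "AE x in lborel. Re (g1 x - g2 x) = 0"
  proof (rule ae_zero_real)
    fix a b :: real assume ab: "a \<le> b"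
    have e: "\<And>x. indicator {a..b} x * Re (g1 x - g2 x) = Re (indicator {a..b} x *\<^sub>R g1 x - indicator {a..b} x *\<^sub>R g2 x)"
      by (auto simp: indicator_def)
    show "integrable lborel (\<lambda>x. indicator {a..b} x * Re (g1 x - g2 x))"
      unfolding e by (rule integrable_Re[OF I[OF ab]])
    show "(\<integral>x. indicator {a..b} x * Re (g1 x - g2 x) \<partial>lborel) = 0"
      unfolding e using Z[OF ab] integral_Re[OF I[OF ab]] by simp
  qed auto
  moreover have "AE x in lborel. Im (g1 x - g2 x) = 0"
  proof (rule ae_zero_real)
    fix a b :: real assume ab: "a \<le> b"
    have e: "\<And>x. indicator {a..b} x * Im (g1 x - g2 x) = Im (indicator {a..b} x *\<^sub>R g1 x - indicator {a..b} x *\<^sub>R g2 x)"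
      by (auto simp: indicator_def)
    show "integrable lborel (\<lambda>x. indicator {a..b} x * Im (g1 x - g2 x))"
      unfolding e by (rule integrable_Im[OF I[OF ab]])
    show "(\<integral>x. indicator {a..b} x * Im (g1 x - g2 x) \<partial>lborel) = 0"
      unfolding e using Z[OF ab] integral_Im[OF I[OF ab]] by simp
  qed auto
  ultimately show ?thesis by eventually_elim (simp add: complex_eq_iff)
qed




lemma int_mult_cont:
  fixes f c :: "real \<Rightarrow> complex"
  assumes fi: "integrable lborel (\<lambda>t. indicator {a..b} t *\<^sub>R f t)"
    and cc: "continuous_on UNIV c" and fm: "f \<in> borel_measurable borel"
  shows "integrable lborel (\<lambda>t. indicator {a..b} t *\<^sub>R (f t * c t))"
proof -
  have "compact (c ` {a..b})" by (rule compact_continuous_image) (auto intro: continuous_on_subset[OF cc])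
  then obtain B where B: "\<And>x. x \<in> {a..b} \<Longrightarrow> norm (c x) \<le> B"
    by (meson compact_imp_bounded bounded_iff imageI)
  have cm: "c \<in> borel_measurable borel" using cc borel_measurable_continuous_onI by blast
  show ?thesis
  proof (rule Bochner_Integration.integrable_bound[OF integrable_scaleR_right[OF fi, of B]])
    show "(\<lambda>t. indicator {a..b} t *\<^sub>R (f t * c t)) \<in> borel_measurable lborel"
      using fm cm by measurable
    show "AE x in lborel. norm (indicator {a..b} x *\<^sub>R (f x * c x)) \<le> norm (B *\<^sub>R (indicator {a..b} x *\<^sub>R f x))"
    proof (rule AE_I2)
      fix x
      show "norm (indicator {a..b} x *\<^sub>R (f x * c x)) \<le> norm (B *\<^sub>R (indicator {a..b} x *\<^sub>R f x))"
      proof (cases "x \<in> {a..b}")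
        case True
        have "norm (f x * c x) \<le> norm (f x) * B"
          using B[OF True] by (simp add: norm_mult mult_left_mono)
        moreover have "0 \<le> B" using B[OF True] norm_ge_zero order_trans by blast
        ultimately show ?thesis using True by (simp add: mult.commute)
      qed simp
    qed
  qed
qed

lemma ind_cmult[simp]:
  fixes c :: complex
  shows "(\<integral>t. indicator A t *\<^sub>R (c * f t) \<partial>M) = c * (\<integral>t. indicator A t *\<^sub>R f t \<partial>M)"
proof -
  have "(\<lambda>t. indicator A t *\<^sub>R (c * f t)) = (\<lambda>t. c * (indicator A t *\<^sub>R f t))" by (auto simp: fun_eq_iff)
  then show ?thesis by (simp only: integral_mult_right_zero)
qed

lemma ind_cmult_int[simp, intro]:
  fixes c :: complex
  assumes "integrable M (\<lambda>t. indicator A t *\<^sub>R f t)"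
  shows "integrable M (\<lambda>t. indicator A t *\<^sub>R (c * f t))"
proof -
  have e: "(\<lambda>t. indicator A t *\<^sub>R (c * f t)) = (\<lambda>t. c * (indicator A t *\<^sub>R f t))" by (auto simp: fun_eq_iff)
  have "integrable M (\<lambda>t. c * (indicator A t *\<^sub>R f t))" using assms by (rule integrable_mult_right)
  then show ?thesis by (simp only: e)
qed

lemma wd_borel': "weak_deriv v g \<Longrightarrow> g \<in> borel_measurable borel"
  unfolding weak_deriv_def by auto

lemma wd_mult:
  assumes u: "weak_deriv u f" and v: "weak_deriv v h"
  shows "weak_deriv (\<lambda>x. u x * v x) (\<lambda>x. f x * v x + u x * h x)"
proof -
  have fm[measurable]: "f \<in> borel_measurable borel" and hm[measurable]: "h \<in> borel_measurable borel"
    using u v by (auto simp: weak_deriv_def)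
  have um[measurable]: "u \<in> borel_measurable borel" and vm[measurable]: "v \<in> borel_measurable borel"
    using wd_borel u v by auto
  have uc: "continuous_on UNIV u" and vc: "continuous_on UNIV v" using wd_cont u v by auto
  have main: "integrable lborel (\<lambda>t. indicator {a..b} t *\<^sub>R (f t * v t + u t * h t)) \<and>
     u b * v b - u a * v a = (\<integral>t. indicator {a..b} t *\<^sub>R (f t * v t + u t * h t) \<partial>lborel)"
    if ab: "a \<le> b" for a b
  proof -
    have I1: "integrable lborel (\<lambda>t. indicator {a..b} t *\<^sub>R (f t * v t))"
      by (rule int_mult_cont[OF wd_D(1)[OF u ab] vc fm])
    have I2': "integrable lborel (\<lambda>t. indicator {a..b} t *\<^sub>R (h t * u t))"
      by (rule int_mult_cont[OF wd_D(1)[OF v ab] uc hm])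
    have I2: "integrable lborel (\<lambda>t. indicator {a..b} t *\<^sub>R (u t * h t))"
      using I2' by (simp add: mult.commute)
    have split: "(\<integral>t. indicator {a..b} t *\<^sub>R (f t * v t + u t * h t) \<partial>lborel)
       = (\<integral>t. indicator {a..b} t *\<^sub>R (f t * v t) \<partial>lborel) + (\<integral>t. indicator {a..b} t *\<^sub>R (u t * h t) \<partial>lborel)"
      using I1 I2 by (subst Bochner_Integration.integral_add[symmetric]) (auto simp: scaleR_add_right)
    define K where "K s t = (if a \<le> s \<and> s \<le> t \<and> t \<le> b then h s * f t else 0)" for s t
    have Km[measurable]: "(\<lambda>(s,t). K s t) \<in> borel_measurable (lborel \<Otimes>\<^sub>M lborel)"
      unfolding K_def by measurable
    define C where "C = (\<integral>t. indicator {a..b} t * norm (f t) \<partial>lborel)"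
    have fnI: "integrable lborel (\<lambda>t. indicator {s..b} t * norm (f t))" if "s \<le> b" for s
      using integrable_norm[OF wd_D(1)[OF u that]] by (simp add: indicator_def)
    have inner_t: "(\<integral>t. K s t \<partial>lborel) = indicator {a..b} s *\<^sub>R (h s * (u b - u s))" for s
    proof (cases "a \<le> s \<and> s \<le> b")
      case True
      have "(\<lambda>t. K s t) = (\<lambda>t. h s * (indicator {s..b} t *\<^sub>R f t))"
        using True by (auto simp: K_def indicator_def fun_eq_iff)
      then have "(\<integral>t. K s t \<partial>lborel) = h s * (\<integral>t. indicator {s..b} t *\<^sub>R f t \<partial>lborel)"
        by (simp only: integral_mult_right_zero)
      then have "(\<integral>t. K s t \<partial>lborel) = h s * (u b - u s)" using True wd_D(2)[OF u, of s b] by simp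
      then show ?thesis using True by simp
    next
      case False
      then have "(\<lambda>t. K s t) = (\<lambda>t. 0)" by (auto simp: K_def fun_eq_iff)
      then show ?thesis using False by (simp add: indicator_def)
    qed
    have inner_s: "(\<integral>s. K s t \<partial>lborel) = indicator {a..b} t *\<^sub>R (f t * (v t - v a))" for t
    proof (cases "a \<le> t \<and> t \<le> b")
      case True
      have "(\<lambda>s. K s t) = (\<lambda>s. (indicator {a..t} s *\<^sub>R h s) * f t)"
        using True by (auto simp: K_def indicator_def fun_eq_iff)
      then have "(\<integral>s. K s t \<partial>lborel) = (\<integral>s. indicator {a..t} s *\<^sub>R h s \<partial>lborel) * f t"
        by (simp only: integral_mult_left_zero)
      then have "(\<integral>s. K s t \<partial>lborel) = f t * (v t - v a)" using True wd_D(2)[OF v, of a t] by (simp add: mult.commute)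
      then show ?thesis using True by simp
    next
      case False
      then have "(\<lambda>s. K s t) = (\<lambda>s. 0)" by (auto simp: K_def fun_eq_iff)
      then show ?thesis using False by (simp add: indicator_def)
    qed
    have Kint: "integrable (lborel \<Otimes>\<^sub>M lborel) (\<lambda>(s,t). K s t)"
    proof (rule lborel_pair.Fubini_integrable)
      show "(\<lambda>(s,t). K s t) \<in> borel_measurable (lborel \<Otimes>\<^sub>M lborel)" by (rule Km)
      show "AE s in lborel. integrable lborel (\<lambda>t. case (s, t) of (s, t) \<Rightarrow> K s t)"
      proof (rule AE_I2)
        fix s
        show "integrable lborel (\<lambda>t. case (s, t) of (s, t) \<Rightarrow> K s t)"
        proof (cases "a \<le> s \<and> s \<le> b")
          case True
          have "(\<lambda>t. K s t) = (\<lambda>t. h s * (indicator {s..b} t *\<^sub>R f t))"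
            using True by (auto simp: K_def indicator_def fun_eq_iff)
          moreover have "integrable lborel (\<lambda>t. h s * (indicator {s..b} t *\<^sub>R f t))"
            using True wd_D(1)[OF u, of s b] by (intro integrable_mult_right) auto
          ultimately show ?thesis by simp
        next
          case False
          then have "(\<lambda>t. K s t) = (\<lambda>t. 0)" by (auto simp: K_def fun_eq_iff)
          then show ?thesis by simp
        qed
      qed
      show "integrable lborel (\<lambda>s. \<integral>t. norm (case (s, t) of (s, t) \<Rightarrow> K s t) \<partial>lborel)"
      proof (rule Bochner_Integration.integrable_bound[OF integrable_scaleR_right[OF integrable_norm[OF wd_D(1)[OF v ab]], of C]])
        show "(\<lambda>s. \<integral>t. norm (case (s, t) of (s, t) \<Rightarrow> K s t) \<partial>lborel) \<in> borel_measurable lborel"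
          using Km by measurable
        show "AE s in lborel. norm (\<integral>t. norm (case (s, t) of (s, t) \<Rightarrow> K s t) \<partial>lborel) \<le> norm (C *\<^sub>R norm (indicator {a..b} s *\<^sub>R h s))"
        proof (rule AE_I2)
          fix s
          show "norm (\<integral>t. norm (case (s, t) of (s, t) \<Rightarrow> K s t) \<partial>lborel) \<le> norm (C *\<^sub>R norm (indicator {a..b} s *\<^sub>R h s))"
          proof (cases "a \<le> s \<and> s \<le> b")
            case True
            have e: "(\<lambda>t. norm (K s t)) = (\<lambda>t. norm (h s) * (indicator {s..b} t * norm (f t)))"
              using True by (auto simp: K_def indicator_def fun_eq_iff norm_mult)
            have le: "(\<integral>t. indicator {s..b} t * norm (f t) \<partial>lborel) \<le> C"
              unfolding C_def using True fnI[of s] fnI[of a] ab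
              by (intro integral_mono) (auto simp: indicator_def)
            have nn: "0 \<le> (\<integral>t. indicator {s..b} t * norm (f t) \<partial>lborel)"
              by (intro integral_nonneg_AE) auto
            have "norm (\<integral>t. norm (K s t) \<partial>lborel) = norm (h s) * (\<integral>t. indicator {s..b} t * norm (f t) \<partial>lborel)"
              unfolding e using nn by simp
            also have "\<dots> \<le> norm (h s) * C" using le by (simp add: mult_left_mono)
            finally show ?thesis using True nn le by (simp add: mult.commute)
          next
            case False
            then have "(\<lambda>t. norm (K s t)) = (\<lambda>t. 0)" by (auto simp: K_def fun_eq_iff)
            then show ?thesis by simp
          qed
        qed
      qed
    qed
    have fub: "(\<integral>t. (\<integral>s. K s t \<partial>lborel) \<partial>lborel) = (\<integral>s. (\<integral>t. K s t \<partial>lborel) \<partial>lborel)"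
      by (rule lborel_pair.Fubini_integral[OF Kint])
    have L: "(\<integral>t. (\<integral>s. K s t \<partial>lborel) \<partial>lborel) =
       (\<integral>t. indicator {a..b} t *\<^sub>R (f t * v t) \<partial>lborel) - v a * (u b - u a)"
    proof -
      have "(\<integral>t. (\<integral>s. K s t \<partial>lborel) \<partial>lborel) = (\<integral>t. indicator {a..b} t *\<^sub>R (f t * v t) - v a * (indicator {a..b} t *\<^sub>R f t) \<partial>lborel)"
        unfolding inner_s by (rule Bochner_Integration.integral_cong) (auto simp: algebra_simps indicator_def)
      also have "\<dots> = (\<integral>t. indicator {a..b} t *\<^sub>R (f t * v t) \<partial>lborel) - v a * (u b - u a)"
        using I1 wd_D[OF u ab] by (subst Bochner_Integration.integral_diff) auto
      finally show ?thesis .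
    qed
    have R: "(\<integral>s. (\<integral>t. K s t \<partial>lborel) \<partial>lborel) =
       u b * (v b - v a) - (\<integral>t. indicator {a..b} t *\<^sub>R (u t * h t) \<partial>lborel)"
    proof -
      have "(\<integral>s. (\<integral>t. K s t \<partial>lborel) \<partial>lborel) = (\<integral>s. u b * (indicator {a..b} s *\<^sub>R h s) - indicator {a..b} s *\<^sub>R (u s * h s) \<partial>lborel)"
        unfolding inner_t by (rule Bochner_Integration.integral_cong) (auto simp: algebra_simps indicator_def)
      also have "\<dots> = u b * (v b - v a) - (\<integral>t. indicator {a..b} t *\<^sub>R (u t * h t) \<partial>lborel)"
        using I2 wd_D[OF v ab] by (subst Bochner_Integration.integral_diff) auto
      finally show ?thesis .
    qed
    have "u b * v b - u a * v a = (\<integral>t. indicator {a..b} t *\<^sub>R (f t * v t) \<partial>lborel) + (\<integral>t. indicator {a..b} t *\<^sub>R (u t * h t) \<partial>lborel)"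
      using fub L R by (simp add: algebra_simps)
    moreover have "integrable lborel (\<lambda>t. indicator {a..b} t *\<^sub>R (f t * v t + u t * h t))"
      using Bochner_Integration.integrable_add[OF I1 I2] by (simp add: scaleR_add_right)
    ultimately show ?thesis using split by simp
  qed
  show ?thesis unfolding weak_deriv_def set_integrable_def set_lebesgue_integral_def
    using main by auto
qed




lemma meas_cnj[measurable (raw)]: "f \<in> borel_measurable M \<Longrightarrow> (\<lambda>x. cnj (f x)) \<in> borel_measurable M"
  by (rule measurable_compose[OF _ borel_measurable_continuous_onI]) (auto intro: continuous_intros)

lemma wd_add:
  assumes u: "weak_deriv u f" and v: "weak_deriv v h"
  shows "weak_deriv (\<lambda>x. u x + v x) (\<lambda>x. f x + h x)"
proof -
  have m: "(\<lambda>x. f x + h x) \<in> borel_measurable lborel" using u v unfolding weak_deriv_def by auto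
  have "integrable lborel (\<lambda>t. indicator {a..b} t *\<^sub>R (f t + h t)) \<and>
     u b + v b - (u a + v a) = (\<integral>t. indicator {a..b} t *\<^sub>R (f t + h t) \<partial>lborel)" if ab: "a \<le> b" for a b
  proof -
    note A = wd_D[OF u ab] and B = wd_D[OF v ab]
    have e: "(\<lambda>t. indicator {a..b} t *\<^sub>R (f t + h t)) = (\<lambda>t. indicator {a..b} t *\<^sub>R f t + indicator {a..b} t *\<^sub>R h t)"
      by (simp add: scaleR_add_right)
    show ?thesis unfolding e
      by (intro conjI Bochner_Integration.integrable_add A(1) B(1))
        (simp add: Bochner_Integration.integral_add[OF A(1) B(1)] A(2)[symmetric] B(2)[symmetric])
  qed
  then show ?thesis using m unfolding weak_deriv_def set_integrable_def set_lebesgue_integral_def by auto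
qed

lemma wd_const: "weak_deriv (\<lambda>x. c) (\<lambda>x. 0)"
  unfolding weak_deriv_def set_integrable_def set_lebesgue_integral_def by auto

lemma wd_cnj:
  assumes "weak_deriv u f"
  shows "weak_deriv (\<lambda>x. cnj (u x)) (\<lambda>x. cnj (f x))"
proof -
  have m: "(\<lambda>x. cnj (f x)) \<in> borel_measurable lborel" using assms unfolding weak_deriv_def by (auto intro: meas_cnj)
  have "integrable lborel (\<lambda>t. indicator {a..b} t *\<^sub>R cnj (f t)) \<and>
     cnj (u b) - cnj (u a) = (\<integral>t. indicator {a..b} t *\<^sub>R cnj (f t) \<partial>lborel)" if ab: "a \<le> b" for a b
  proof -
    note A = wd_D[OF assms ab]
    have e: "(\<lambda>t. indicator {a..b} t *\<^sub>R cnj (f t)) = (\<lambda>t. cnj (indicator {a..b} t *\<^sub>R f t))"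
      by (auto simp: fun_eq_iff)
    show ?thesis unfolding e
      by (intro conjI integrable_cnj A(1)) (simp only: Bochner_Integration.integral_cnj A(2)[symmetric] complex_cnj_diff)
  qed
  then show ?thesis using m unfolding weak_deriv_def set_integrable_def set_lebesgue_integral_def by auto
qed

lemma wd_cong: "weak_deriv u f \<Longrightarrow> (\<And>x. f x = f' x) \<Longrightarrow> (\<And>x. u x = u' x) \<Longrightarrow> weak_deriv u' f'"
proof -
  assume "weak_deriv u f" "\<And>x. f x = f' x" "\<And>x. u x = u' x"
  then have "f = f'" "u = u'" by auto
  then show "weak_deriv u' f'" using \<open>weak_deriv u f\<close> by simp
qed

lemma wd_cmult:
  assumes "weak_deriv u f"
  shows "weak_deriv (\<lambda>x. c * u x) (\<lambda>x. c * f x)"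
  by (rule wd_cong[OF wd_mult[OF wd_const assms]]) auto

lemma wd_diff:
  assumes "weak_deriv u f" "weak_deriv v h"
  shows "weak_deriv (\<lambda>x. u x - v x) (\<lambda>x. f x - h x)"
  by (rule wd_cong[OF wd_add[OF assms(1) wd_cmult[OF assms(2), of "-1"]]]) auto

lemma L2_meas: "L2 f \<Longrightarrow> f \<in> borel_measurable borel"
  unfolding L2_def by auto

lemma L2_mult:
  fixes f g :: "real \<Rightarrow> 'a::{real_normed_field, banach, second_countable_topology}"
  assumes "L2 f" "L2 g"
  shows "integrable lborel (\<lambda>x. f x * g x)"
proof (rule Bochner_Integration.integrable_bound)
  show "integrable lborel (\<lambda>x. (norm (f x))\<^sup>2 + (norm (g x))\<^sup>2)"
    using assms unfolding L2_def by auto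
  show "(\<lambda>x. f x * g x) \<in> borel_measurable lborel" using assms unfolding L2_def by auto
  show "AE x in lborel. norm (f x * g x) \<le> norm ((norm (f x))\<^sup>2 + (norm (g x))\<^sup>2)"
  proof (rule AE_I2)
    fix x
    have "norm (f x) * norm (g x) \<le> (norm (f x))\<^sup>2 + (norm (g x))\<^sup>2"
      using sum_squares_bound[of "norm (f x)" "norm (g x)"] mult_nonneg_nonneg[OF norm_ge_zero norm_ge_zero, of "f x" "g x"]
      by linarith
    then show "norm (f x * g x) \<le> norm ((norm (f x))\<^sup>2 + (norm (g x))\<^sup>2)"
      by (simp add: norm_mult)
  qed
qed

lemma L2_add:
  fixes f g :: "real \<Rightarrow> 'a::{real_normed_field, banach, second_countable_topology}"
  assumes "L2 f" "L2 g"
  shows "L2 (\<lambda>x. f x + g x)"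
  unfolding L2_def
proof
  show "(\<lambda>x. f x + g x) \<in> borel_measurable lborel" using assms unfolding L2_def by auto
  show "integrable lborel (\<lambda>x. (norm (f x + g x))\<^sup>2)"
  proof (rule Bochner_Integration.integrable_bound)
    show "integrable lborel (\<lambda>x. 2 * (norm (f x))\<^sup>2 + 2 * (norm (g x))\<^sup>2)"
      using assms unfolding L2_def by auto
    show "(\<lambda>x. (norm (f x + g x))\<^sup>2) \<in> borel_measurable lborel" using assms unfolding L2_def by auto
    show "AE x in lborel. norm ((norm (f x + g x))\<^sup>2) \<le> norm (2 * (norm (f x))\<^sup>2 + 2 * (norm (g x))\<^sup>2)"
    proof (rule AE_I2)
      fix x
      have t: "norm (f x + g x) \<le> norm (f x) + norm (g x)" by (rule norm_triangle_ineq)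
      have "(norm (f x + g x))\<^sup>2 \<le> (norm (f x) + norm (g x))\<^sup>2"
        using t by (simp add: power_mono)
      also have "\<dots> \<le> 2 * (norm (f x))\<^sup>2 + 2 * (norm (g x))\<^sup>2"
        unfolding power2_sum using sum_squares_bound[of "norm (f x)" "norm (g x)"] by linarith
      finally show "norm ((norm (f x + g x))\<^sup>2) \<le> norm (2 * (norm (f x))\<^sup>2 + 2 * (norm (g x))\<^sup>2)"
        by simp
    qed
  qed
qed

lemma L2_bmult:
  fixes f c :: "real \<Rightarrow> 'a::{real_normed_field, banach, second_countable_topology}"
  assumes "L2 f" "c \<in> borel_measurable borel" "\<And>x. norm (c x) \<le> B"
  shows "L2 (\<lambda>x. c x * f x)"
  unfolding L2_def
proof
  show "(\<lambda>x. c x * f x) \<in> borel_measurable lborel" using assms unfolding L2_def by auto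
  show "integrable lborel (\<lambda>x. (norm (c x * f x))\<^sup>2)"
  proof (rule Bochner_Integration.integrable_bound)
    show "integrable lborel (\<lambda>x. B\<^sup>2 * (norm (f x))\<^sup>2)"
      using assms unfolding L2_def by auto
    show "(\<lambda>x. (norm (c x * f x))\<^sup>2) \<in> borel_measurable lborel" using assms unfolding L2_def by auto
    show "AE x in lborel. norm ((norm (c x * f x))\<^sup>2) \<le> norm (B\<^sup>2 * (norm (f x))\<^sup>2)"
    proof (rule AE_I2)
      fix x
      have "norm (c x) * norm (f x) \<le> B * norm (f x)" using assms(3)[of x] by (simp add: mult_right_mono)
      then have "(norm (c x) * norm (f x))\<^sup>2 \<le> (B * norm (f x))\<^sup>2" by (simp add: power_mono)
      then show "norm ((norm (c x * f x))\<^sup>2) \<le> norm (B\<^sup>2 * (norm (f x))\<^sup>2)"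
        by (simp add: norm_mult power_mult_distrib)
    qed
  qed
qed

lemma L2_AE:
  assumes "L2 f" "g \<in> borel_measurable borel" "AE x in lborel. f x = g x"
  shows "L2 g"
proof -
  have fm: "f \<in> borel_measurable borel" and fi: "integrable lborel (\<lambda>x. (norm (f x))\<^sup>2)" using assms(1) unfolding L2_def by auto
  have "AE x in lborel. (norm (f x))\<^sup>2 = (norm (g x))\<^sup>2" using assms(3) by eventually_elim simp
  moreover have "(\<lambda>x. (norm (f x))\<^sup>2) \<in> borel_measurable lborel" using fm by measurable
  moreover have "(\<lambda>x. (norm (g x))\<^sup>2) \<in> borel_measurable lborel" using assms(2) by measurable
  ultimately have "integrable lborel (\<lambda>x. (norm (f x))\<^sup>2) = integrable lborel (\<lambda>x. (norm (g x))\<^sup>2)"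
    by (intro integrable_cong_AE)
  then have "integrable lborel (\<lambda>x. (norm (g x))\<^sup>2)" using fi by simp
  then show ?thesis using assms(2) unfolding L2_def by auto
qed

lemma L2_cnj: "L2 f \<Longrightarrow> L2 (\<lambda>x. cnj (f x))"
  unfolding L2_def by (auto intro: meas_cnj)

lemma L2_norm: "L2 f \<Longrightarrow> L2 (\<lambda>x. norm (f x))"
  unfolding L2_def by auto

lemma L2_Re: "L2 (f::real\<Rightarrow>complex) \<Longrightarrow> L2 (\<lambda>x. Re (f x))"
  unfolding L2_def
proof safe
  assume m: "f \<in> borel_measurable lborel" and i: "integrable lborel (\<lambda>x. (norm (f x))\<^sup>2)"
  show "(\<lambda>x. Re (f x)) \<in> borel_measurable lborel" using m by measurable
  show "integrable lborel (\<lambda>x. (norm (Re (f x)))\<^sup>2)"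
  proof (rule Bochner_Integration.integrable_bound[OF i])
    show "(\<lambda>x. (norm (Re (f x)))\<^sup>2) \<in> borel_measurable lborel" using m by measurable
    show "AE x in lborel. norm ((norm (Re (f x)))\<^sup>2) \<le> norm ((norm (f x))\<^sup>2)"
    proof (rule AE_I2)
      fix x
      have "\<bar>Re (f x)\<bar>\<^sup>2 \<le> (cmod (f x))\<^sup>2" by (rule power_mono[OF abs_Re_le_cmod abs_ge_zero])
      then show "norm ((norm (Re (f x)))\<^sup>2) \<le> norm ((norm (f x))\<^sup>2)" by simp
    qed
  qed
qed

lemma L2_of_real: "L2 (f::real\<Rightarrow>real) \<Longrightarrow> L2 (\<lambda>x. complex_of_real (f x))"
  unfolding L2_def by auto

lemma L2_uminus: "L2 (f::real\<Rightarrow>'a::{banach, second_countable_topology}) \<Longrightarrow> L2 (\<lambda>x. - f x)"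
  unfolding L2_def by auto




lemma wd_lim_top:
  assumes F: "weak_deriv F G" and Gi: "integrable lborel G"
  shows "\<exists>L. (F \<longlongrightarrow> L) at_top"
proof -
  have Gm: "G \<in> borel_measurable lborel" using Gi by auto
  have lim: "((\<lambda>x. \<integral>t. indicator {0..x} t *\<^sub>R G t \<partial>lborel) \<longlongrightarrow> (\<integral>t. indicator {0..} t *\<^sub>R G t \<partial>lborel)) at_top"
  proof (rule integral_dominated_convergence_at_top[where w="\<lambda>t. norm (G t)"])
    show "(\<lambda>t. indicator {0..} t *\<^sub>R G t) \<in> borel_measurable lborel" using Gm by measurable
    show "(\<lambda>t. indicator {0..x} t *\<^sub>R G t) \<in> borel_measurable lborel" for x using Gm by measurable
    show "integrable lborel (\<lambda>t. norm (G t))" using Gi by auto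
    show "AE t in lborel. ((\<lambda>x. indicator {0..x} t *\<^sub>R G t) \<longlongrightarrow> indicator {0..} t *\<^sub>R G t) at_top"
    proof (rule AE_I2)
      fix t :: real
      have "eventually (\<lambda>x. indicator {0..x} t *\<^sub>R G t = indicator {0..} t *\<^sub>R G t) at_top"
        using eventually_ge_at_top[of t] by eventually_elim (auto simp: indicator_def)
      then show "((\<lambda>x. indicator {0..x} t *\<^sub>R G t) \<longlongrightarrow> indicator {0..} t *\<^sub>R G t) at_top"
        by (rule tendsto_eventually)
    qed
    show "\<forall>\<^sub>F x in at_top. AE t in lborel. norm (indicator {0..x} t *\<^sub>R G t) \<le> norm (G t)"
      by (intro always_eventually allI AE_I2) (auto simp: indicator_def)
  qed
  have "eventually (\<lambda>x. F 0 + (\<integral>t. indicator {0..x} t *\<^sub>R G t \<partial>lborel) = F x) at_top"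
    using eventually_ge_at_top[of 0] by eventually_elim (simp add: wd_D(2)[OF F, symmetric])
  then have "(F \<longlongrightarrow> F 0 + (\<integral>t. indicator {0..} t *\<^sub>R G t \<partial>lborel)) at_top"
    using tendsto_add[OF tendsto_const lim] by (rule Lim_transform_eventually[rotated])
  then show ?thesis by blast
qed

lemma wd_lim_bot:
  assumes F: "weak_deriv F G" and Gi: "integrable lborel G"
  shows "\<exists>L. (F \<longlongrightarrow> L) at_bot"
proof -
  have Gm: "G \<in> borel_measurable lborel" using Gi by auto
  have lim: "((\<lambda>x. \<integral>t. indicator {-x..0} t *\<^sub>R G t \<partial>lborel) \<longlongrightarrow> (\<integral>t. indicator {..0} t *\<^sub>R G t \<partial>lborel)) at_top"
  proof (rule integral_dominated_convergence_at_top[where w="\<lambda>t. norm (G t)"])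
    show "(\<lambda>t. indicator {..0} t *\<^sub>R G t) \<in> borel_measurable lborel" using Gm by measurable
    show "(\<lambda>t. indicator {-x..0} t *\<^sub>R G t) \<in> borel_measurable lborel" for x using Gm by measurable
    show "integrable lborel (\<lambda>t. norm (G t))" using Gi by auto
    show "AE t in lborel. ((\<lambda>x. indicator {-x..0} t *\<^sub>R G t) \<longlongrightarrow> indicator {..0} t *\<^sub>R G t) at_top"
    proof (rule AE_I2)
      fix t :: real
      have "eventually (\<lambda>x. indicator {-x..0} t *\<^sub>R G t = indicator {..0} t *\<^sub>R G t) at_top"
        using eventually_ge_at_top[of "-t"] by eventually_elim (auto simp: indicator_def)
      then show "((\<lambda>x. indicator {-x..0} t *\<^sub>R G t) \<longlongrightarrow> indicator {..0} t *\<^sub>R G t) at_top"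
        by (rule tendsto_eventually)
    qed
    show "\<forall>\<^sub>F x in at_top. AE t in lborel. norm (indicator {-x..0} t *\<^sub>R G t) \<le> norm (G t)"
      by (intro always_eventually allI AE_I2) (auto simp: indicator_def)
  qed
  have "eventually (\<lambda>x. F 0 - (\<integral>t. indicator {-x..0} t *\<^sub>R G t \<partial>lborel) = F (-x)) at_top"
    using eventually_ge_at_top[of 0] by eventually_elim (simp add: wd_D(2)[OF F, symmetric])
  then have "((\<lambda>x. F (-x)) \<longlongrightarrow> F 0 - (\<integral>t. indicator {..0} t *\<^sub>R G t \<partial>lborel)) at_top"
    using tendsto_diff[OF tendsto_const lim] by (rule Lim_transform_eventually[rotated])
  then show ?thesis unfolding filterlim_at_bot_mirror by blast
qed

lemma int_lim_zero_top:
  fixes F :: "real \<Rightarrow> real"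
  assumes Fi: "integrable lborel F" and lim: "(F \<longlongrightarrow> L) at_top"
  shows "L = 0"
proof (rule ccontr)
  assume L: "L \<noteq> 0"
  then have "\<bar>L\<bar> / 2 > 0" by simp
  from lim[unfolded tendsto_iff, rule_format, OF this]
  obtain M where M: "\<And>x. x \<ge> M \<Longrightarrow> dist (F x) L < \<bar>L\<bar> / 2"
    by (auto simp: eventually_at_top_linorder)
  have Fb: "\<bar>L\<bar> / 2 \<le> \<bar>F x\<bar>" if "x \<ge> M" for x
  proof -
    have "\<bar>F x - L\<bar> < \<bar>L\<bar> / 2" using M[OF that] by (simp add: dist_real_def)
    moreover have "\<bar>F x - (F x - L)\<bar> \<le> \<bar>F x\<bar> + \<bar>F x - L\<bar>" by (rule abs_triangle_ineq4)
    ultimately show ?thesis by simp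
  qed
  have "\<bar>L\<bar> / 2 * real n \<le> (\<integral>x. \<bar>F x\<bar> \<partial>lborel)" for n :: nat
  proof -
    have "(\<integral>x. \<bar>L\<bar> / 2 * (x^0 * indicator {M..M + real n} x) \<partial>lborel) = \<bar>L\<bar> / 2 * real n"
      using integral_power[of M "M + real n" 0] by simp
    moreover have "(\<integral>x. \<bar>L\<bar> / 2 * (x^0 * indicator {M..M + real n} x) \<partial>lborel) \<le> (\<integral>x. \<bar>F x\<bar> \<partial>lborel)"
    proof (rule integral_mono)
      show "integrable lborel (\<lambda>x. \<bar>L\<bar> / 2 * (x^0 * indicator {M..M + real n} x))"
        by (intro integrable_mult_right borel_integrable_atLeastAtMost) auto
      show "integrable lborel (\<lambda>x. \<bar>F x\<bar>)" using Fi by auto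
      show "\<bar>L\<bar> / 2 * (x^0 * indicator {M..M + real n} x) \<le> \<bar>F x\<bar>" for x
        using Fb[of x] by (auto simp: indicator_def)
    qed
    ultimately show ?thesis by simp
  qed
  moreover obtain n :: nat where "(\<integral>x. \<bar>F x\<bar> \<partial>lborel) / (\<bar>L\<bar> / 2) < real n"
    using reals_Archimedean2 by blast
  ultimately show False using \<open>\<bar>L\<bar> / 2 > 0\<close>
    by (metis divide_less_eq mult.commute not_le)
qed

lemma int_lim_zero_bot:
  fixes F :: "real \<Rightarrow> real"
  assumes Fi: "integrable lborel F" and lim: "(F \<longlongrightarrow> L) at_bot"
  shows "L = 0"
proof (rule int_lim_zero_top)
  show "integrable lborel (\<lambda>x. F (-x))"
    using lborel_integrable_real_affine_iff[of "-1" F 0] Fi by simp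
  show "((\<lambda>x. F (-x)) \<longlongrightarrow> L) at_top" using lim unfolding filterlim_at_bot_mirror .
qed




lemma lim_zero_of_wd:
  assumes P: "weak_deriv P P'" and P'i: "integrable lborel P'" and Pn: "integrable lborel (\<lambda>x. norm (P x))"
  shows "(P \<longlongrightarrow> 0) at_top" "(P \<longlongrightarrow> 0) at_bot"
proof -
  obtain L where L: "(P \<longlongrightarrow> L) at_top" using wd_lim_top[OF P P'i] by blast
  have "norm L = 0" by (rule int_lim_zero_top[OF Pn tendsto_norm[OF L]])
  then show "(P \<longlongrightarrow> 0) at_top" using L by simp
  obtain L' where L': "(P \<longlongrightarrow> L') at_bot" using wd_lim_bot[OF P P'i] by blast
  have "norm L' = 0" by (rule int_lim_zero_bot[OF Pn tendsto_norm[OF L']])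
  then show "(P \<longlongrightarrow> 0) at_bot" using L' by simp
qed

lemma sq_to_zero:
  assumes "((\<lambda>x. (norm (f x))\<^sup>2) \<longlongrightarrow> 0) F"
  shows "(f \<longlongrightarrow> 0) F"
proof -
  have "((\<lambda>x. sqrt ((norm (f x))\<^sup>2)) \<longlongrightarrow> sqrt 0) F" by (rule tendsto_real_sqrt[OF assms])
  then have "((\<lambda>x. norm (f x)) \<longlongrightarrow> 0) F" by simp
  then show ?thesis by (simp add: tendsto_norm_zero_iff)
qed

lemma norm_sq_cnj: "norm (z * cnj z) = (norm z)\<^sup>2"
  by (simp add: norm_mult power2_eq_square)

lemma H1_lim:
  assumes "H1 w"
  shows "(w \<longlongrightarrow> 0) at_top" "(w \<longlongrightarrow> 0) at_bot"
proof -
  obtain g where g: "weak_deriv w g" and Lg: "L2 g" and Lw: "L2 w" using assms unfolding H1_def by blast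
  have P: "weak_deriv (\<lambda>x. w x * cnj (w x)) (\<lambda>x. g x * cnj (w x) + w x * cnj (g x))"
    by (rule wd_mult[OF g wd_cnj[OF g]])
  have P'i: "integrable lborel (\<lambda>x. g x * cnj (w x) + w x * cnj (g x))"
    by (intro Bochner_Integration.integrable_add L2_mult Lg Lw L2_cnj)
  have Pn: "integrable lborel (\<lambda>x. norm (w x * cnj (w x)))"
    using Lw unfolding L2_def norm_sq_cnj by auto
  note lz = lim_zero_of_wd[OF P P'i Pn]
  show "(w \<longlongrightarrow> 0) at_top" using tendsto_norm[OF lz(1)] unfolding norm_sq_cnj norm_zero by (rule sq_to_zero)
  show "(w \<longlongrightarrow> 0) at_bot" using tendsto_norm[OF lz(2)] unfolding norm_sq_cnj norm_zero by (rule sq_to_zero)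
qed

lemma X1_lim:
  assumes "X1 V"
  shows "((\<lambda>x. norm (V x)) \<longlongrightarrow> 1) at_top" "((\<lambda>x. norm (V x)) \<longlongrightarrow> 1) at_bot"
proof -
  obtain g where g: "weak_deriv V g" and Lg: "L2 g" and bd: "bounded (range V)"
    and LQr: "L2 (\<lambda>x. 1 - (norm (V x))\<^sup>2)" using assms unfolding X1_def by blast
  obtain B where B: "\<And>x. norm (V x) \<le> B" using bd unfolding bounded_iff by blast
  have Vm: "V \<in> borel_measurable borel" by (rule wd_borel[OF g])
  define Q where "Q x = 1 - V x * cnj (V x)" for x
  define Q' where "Q' x = - (g x * cnj (V x) + V x * cnj (g x))" for x
  have Q: "weak_deriv Q Q'"
    by (rule wd_cong[OF wd_diff[OF wd_const wd_mult[OF g wd_cnj[OF g]]]]) (auto simp: Q_def Q'_def)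
  have Qr: "Q x = complex_of_real (1 - (norm (V x))\<^sup>2)" for x
    using complex_norm_square[of "V x"] by (simp add: Q_def)
  have LQ: "L2 Q" unfolding Qr using L2_of_real[OF LQr] by simp
  have LQ': "L2 Q'"
  proof -
    have "L2 (\<lambda>x. cnj (V x) * g x)"
      by (rule L2_bmult[OF Lg, of _ B]) (use Vm B in \<open>auto intro: meas_cnj\<close>)
    moreover have "L2 (\<lambda>x. V x * cnj (g x))"
      by (rule L2_bmult[OF L2_cnj[OF Lg], of _ B]) (use Vm B in auto)
    ultimately have "L2 (\<lambda>x. - (cnj (V x) * g x + V x * cnj (g x)))"
      by (intro L2_uminus L2_add)
    then show ?thesis unfolding Q'_def by (simp add: mult.commute)
  qed
  have P: "weak_deriv (\<lambda>x. Q x * Q x) (\<lambda>x. Q' x * Q x + Q x * Q' x)" by (rule wd_mult[OF Q Q])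
  have P'i: "integrable lborel (\<lambda>x. Q' x * Q x + Q x * Q' x)"
    by (intro Bochner_Integration.integrable_add L2_mult LQ LQ')
  have Pn: "integrable lborel (\<lambda>x. norm (Q x * Q x))"
    using LQ unfolding L2_def by (simp add: norm_mult power2_eq_square)
  note lz = lim_zero_of_wd[OF P P'i Pn]
  have nq: "norm (Q x * Q x) = (norm (Q x))\<^sup>2" for x by (simp add: norm_mult power2_eq_square)
  have Q0: "(Q \<longlongrightarrow> 0) at_top" "(Q \<longlongrightarrow> 0) at_bot"
  proof -
    have "((\<lambda>x. norm (Q x * Q x)) \<longlongrightarrow> norm (0::complex)) at_top" by (rule tendsto_norm[OF lz(1)])
    then have "((\<lambda>x. (norm (Q x))\<^sup>2) \<longlongrightarrow> 0) at_top" unfolding nq norm_zero .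
    then show "(Q \<longlongrightarrow> 0) at_top" by (rule sq_to_zero)
    have "((\<lambda>x. norm (Q x * Q x)) \<longlongrightarrow> norm (0::complex)) at_bot" by (rule tendsto_norm[OF lz(2)])
    then have "((\<lambda>x. (norm (Q x))\<^sup>2) \<longlongrightarrow> 0) at_bot" unfolding nq norm_zero .
    then show "(Q \<longlongrightarrow> 0) at_bot" by (rule sq_to_zero)
  qed
  have e: "norm (V x) = sqrt (1 - Re (Q x))" for x
    unfolding Qr by simp
  have "((\<lambda>x. sqrt (1 - Re (Q x))) \<longlongrightarrow> sqrt (1 - Re 0)) at_top"
    by (intro tendsto_intros Q0)
  then show "((\<lambda>x. norm (V x)) \<longlongrightarrow> 1) at_top" unfolding e by simp
  have "((\<lambda>x. sqrt (1 - Re (Q x))) \<longlongrightarrow> sqrt (1 - Re 0)) at_bot"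
    by (intro tendsto_intros Q0)
  then show "((\<lambda>x. norm (V x)) \<longlongrightarrow> 1) at_bot" unfolding e by simp
qed

lemma bounded_of_lims:
  fixes f :: "real \<Rightarrow> 'a::real_normed_vector"
  assumes c: "continuous_on UNIV f" and t: "(f \<longlongrightarrow> a) at_top" and b: "(f \<longlongrightarrow> b) at_bot"
  shows "\<exists>B. \<forall>x. norm (f x) \<le> B"
proof -
  obtain M where M: "\<And>x. x \<ge> M \<Longrightarrow> dist (f x) a < 1"
    using t[unfolded tendsto_iff, rule_format, of 1] by (auto simp: eventually_at_top_linorder)
  obtain N where N: "\<And>x. x \<le> N \<Longrightarrow> dist (f x) b < 1"
    using b[unfolded tendsto_iff, rule_format, of 1] by (auto simp: eventually_at_bot_linorder)
  have "compact (f ` {N..M})"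
    by (rule compact_continuous_image[OF continuous_on_subset[OF c]]) auto
  then obtain C where C: "\<And>x. x \<in> {N..M} \<Longrightarrow> norm (f x) \<le> C"
    by (meson compact_imp_bounded bounded_iff imageI)
  have "norm (f x) \<le> max C (max (norm a + 1) (norm b + 1))" for x
  proof (cases "x \<ge> M")
    case True
    then have "dist (f x) a < 1" by (rule M)
    then have "norm (f x) \<le> norm a + 1"
      using norm_triangle_sub[of "f x" a] by (simp add: dist_norm)
    then show ?thesis by linarith
  next
    case False
    show ?thesis
    proof (cases "x \<le> N")
      case True
      then have "dist (f x) b < 1" by (rule N)
      then have "norm (f x) \<le> norm b + 1"
        using norm_triangle_sub[of "f x" b] by (simp add: dist_norm)
      then show ?thesis by linarith
    next
      case False
      then have "norm (f x) \<le> C" using \<open>\<not> x \<ge> M\<close> by (intro C) auto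
      then show ?thesis by linarith
    qed
  qed
  then show ?thesis by blast
qed




lemma int_cin:
  assumes v: "weak_deriv v f" and u: "weak_deriv u h" and ab: "a \<le> b"
  shows "integrable lborel (\<lambda>x. indicator {a..b} x *\<^sub>R cinner (\<i> * v x) (h x))"
proof -
  have vc: "continuous_on UNIV (\<lambda>x. \<i> * v x)" using wd_cont[OF v] by (intro continuous_intros)
  have hm: "(\<lambda>x. cnj (h x)) \<in> borel_measurable borel" using wd_borel'[OF u] by (rule meas_cnj)
  have "integrable lborel (\<lambda>x. indicator {a..b} x *\<^sub>R (cnj (h x) * (\<i> * v x)))"
    by (rule int_mult_cont[OF wd_D(1)[OF wd_cnj[OF u] ab] vc hm])
  then have "integrable lborel (\<lambda>x. Re (indicator {a..b} x *\<^sub>R (cnj (h x) * (\<i> * v x))))"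
    by (rule integrable_Re)
  moreover have "(\<lambda>x. Re (indicator {a..b} x *\<^sub>R (cnj (h x) * (\<i> * v x)))) = (\<lambda>x. indicator {a..b} x *\<^sub>R cinner (\<i> * v x) (h x))"
    by (auto simp: cinner_def fun_eq_iff mult.commute)
  ultimately show ?thesis by simp
qed

lemma split_int:
  assumes V0: "weak_deriv V0 g0" and w: "weak_deriv w g" and ab: "a \<le> b"
  shows "(\<integral>x. indicator {a..b} x *\<^sub>R cinner (\<i> * (V0 x + w x)) (g0 x + g x) \<partial>lborel)
       = (\<integral>x. indicator {a..b} x *\<^sub>R cinner (\<i> * V0 x) (g0 x) \<partial>lborel)
         + 2 * (\<integral>x. indicator {a..b} x *\<^sub>R cinner (\<i> * w x) (g0 x) \<partial>lborel)
         + (\<integral>x. indicator {a..b} x *\<^sub>R cinner (\<i> * w x) (g x) \<partial>lborel)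
         + (Re (\<i> * (V0 b * cnj (w b))) - Re (\<i> * (V0 a * cnj (w a))))"
proof -
  define P' where "P' x = g0 x * cnj (w x) + V0 x * cnj (g x)" for x
  have P: "weak_deriv (\<lambda>x. V0 x * cnj (w x)) P'"
    unfolding P'_def by (rule wd_mult[OF V0 wd_cnj[OF w]])
  define F1 where "F1 x = indicator {a..b} x *\<^sub>R cinner (\<i> * V0 x) (g0 x)" for x
  define F3 where "F3 x = indicator {a..b} x *\<^sub>R cinner (\<i> * w x) (g0 x)" for x
  define F4 where "F4 x = indicator {a..b} x *\<^sub>R cinner (\<i> * w x) (g x)" for x
  define F5 where "F5 x = Re (\<i> * (indicator {a..b} x *\<^sub>R P' x))" for x
  have i1: "integrable lborel F1" unfolding F1_def by (rule int_cin[OF V0 V0 ab])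
  have i3: "integrable lborel F3" unfolding F3_def by (rule int_cin[OF w V0 ab])
  have i4: "integrable lborel F4" unfolding F4_def by (rule int_cin[OF w w ab])
  have iP: "integrable lborel (\<lambda>x. indicator {a..b} x *\<^sub>R P' x)" by (rule wd_D(1)[OF P ab])
  have i5: "integrable lborel F5" unfolding F5_def
    by (intro integrable_Re integrable_mult_right iP)
  have int5: "integral\<^sup>L lborel F5 = Re (\<i> * (V0 b * cnj (w b))) - Re (\<i> * (V0 a * cnj (w a)))"
  proof -
    have "integral\<^sup>L lborel F5 = Re (integral\<^sup>L lborel (\<lambda>x. \<i> * (indicator {a..b} x *\<^sub>R P' x)))"
      unfolding F5_def by (rule integral_Re[OF integrable_mult_right[OF iP]])
    also have "\<dots> = Re (\<i> * integral\<^sup>L lborel (\<lambda>x. indicator {a..b} x *\<^sub>R P' x))"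
      by (simp only: integral_mult_right_zero)
    also have "\<dots> = Re (\<i> * (V0 b * cnj (w b) - V0 a * cnj (w a)))"
      by (simp only: wd_D(2)[OF P ab, symmetric])
    finally show ?thesis by (simp add: algebra_simps)
  qed
  have pw: "indicator {a..b} x *\<^sub>R cinner (\<i> * (V0 x + w x)) (g0 x + g x) = F1 x + F3 x + F4 x + F3 x + F5 x" for x
    by (simp add: F1_def F3_def F4_def F5_def P'_def cinner_def algebra_simps)
  have hb: "has_bochner_integral lborel (\<lambda>x. F1 x + F3 x + F4 x + F3 x + F5 x)
      (integral\<^sup>L lborel F1 + integral\<^sup>L lborel F3 + integral\<^sup>L lborel F4 + integral\<^sup>L lborel F3 + integral\<^sup>L lborel F5)"
    by (intro has_bochner_integral_add has_bochner_integral_integrable i1 i3 i4 i5)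
  have "(\<integral>x. indicator {a..b} x *\<^sub>R cinner (\<i> * (V0 x + w x)) (g0 x + g x) \<partial>lborel)
     = integral\<^sup>L lborel F1 + integral\<^sup>L lborel F3 + integral\<^sup>L lborel F4 + integral\<^sup>L lborel F3 + integral\<^sup>L lborel F5"
    unfolding pw by (rule has_bochner_integral_integral_eq[OF hb])
  then show ?thesis unfolding int5 by (simp add: F1_def[abs_def] F3_def[abs_def] F4_def[abs_def])
qed

lemma lim_sym_int:
  fixes f :: "real \<Rightarrow> real"
  assumes fi: "integrable lborel f"
  shows "((\<lambda>R. \<integral>x. indicator {-R..R} x *\<^sub>R f x \<partial>lborel) \<longlongrightarrow> integral\<^sup>L lborel f) at_top"
proof (rule integral_dominated_convergence_at_top[where w="\<lambda>t. norm (f t)"])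
  have fm: "f \<in> borel_measurable lborel" using fi by auto
  show "f \<in> borel_measurable lborel" by (rule fm)
  show "(\<lambda>t. indicator {-x..x} t *\<^sub>R f t) \<in> borel_measurable lborel" for x using fm by measurable
  show "integrable lborel (\<lambda>t. norm (f t))" using fi by auto
  show "AE t in lborel. ((\<lambda>x. indicator {-x..x} t *\<^sub>R f t) \<longlongrightarrow> f t) at_top"
  proof (rule AE_I2)
    fix t :: real
    have "eventually (\<lambda>x. indicator {-x..x} t *\<^sub>R f t = f t) at_top"
      using eventually_ge_at_top[of "\<bar>t\<bar>"] by eventually_elim (auto simp: indicator_def)
    then show "((\<lambda>x. indicator {-x..x} t *\<^sub>R f t) \<longlongrightarrow> f t) at_top"
      by (rule tendsto_eventually)
  qed
  show "\<forall>\<^sub>F x in at_top. AE t in lborel. norm (indicator {-x..x} t *\<^sub>R f t) \<le> norm (f t)"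
    by (intro always_eventually allI AE_I2) (auto simp: indicator_def)
qed

lemma csgn_div: "sgn (a / b :: complex) = sgn a / sgn b"
  by (simp add: sgn_eq norm_divide)




lemma ratio_lims:
  fixes a b :: "real \<Rightarrow> complex"
  assumes an: "((\<lambda>R. norm (a R)) \<longlongrightarrow> 1) F" and b0: "(b \<longlongrightarrow> 0) F"
  shows "((\<lambda>R. a R / (a R + b R)) \<longlongrightarrow> 1) F" "((\<lambda>R. (a R + b R) / a R) \<longlongrightarrow> 1) F"
    "eventually (\<lambda>R. a R \<noteq> 0 \<and> a R + b R \<noteq> 0) F"
proof -
  have e1: "eventually (\<lambda>R. 3/4 < norm (a R)) F" by (rule order_tendstoD(1)[OF an]) simp
  have "((\<lambda>R. norm (b R)) \<longlongrightarrow> norm (0::complex)) F" by (rule tendsto_norm[OF b0])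
  then have e2: "eventually (\<lambda>R. norm (b R) < 1/4) F" by (intro order_tendstoD(2)) auto
  have ev: "eventually (\<lambda>R. 1/2 \<le> norm (a R) \<and> 1/2 \<le> norm (a R + b R)) F"
    using e1 e2
  proof eventually_elim
    case (elim R)
    have "norm (a R) \<le> norm (a R + b R) + norm (b R)"
      using norm_triangle_sub[of "a R" "-(b R)"] by simp
    with elim show ?case by linarith
  qed
  have nz: "eventually (\<lambda>R. a R \<noteq> 0 \<and> a R + b R \<noteq> 0) F"
    using ev
  proof eventually_elim
    case (elim R)
    then have "norm (a R) > 0" "norm (a R + b R) > 0" by linarith+
    then show ?case by auto
  qed
  then show "eventually (\<lambda>R. a R \<noteq> 0 \<and> a R + b R \<noteq> 0) F" .
  have q1: "((\<lambda>R. b R / a R) \<longlongrightarrow> 0) F"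
  proof (rule tendsto_0_le[OF b0, where K=2])
    show "eventually (\<lambda>R. norm (b R / a R) \<le> norm (b R) * 2) F"
      using ev
    proof eventually_elim
      case (elim R)
      then have n: "norm (a R) \<ge> 1/2" by linarith
      have "norm (b R) / norm (a R) \<le> norm (b R) / (1/2)"
        by (rule divide_left_mono) (use n in auto)
      then show ?case by (simp add: norm_divide)
    qed
  qed
  have q2: "((\<lambda>R. b R / (a R + b R)) \<longlongrightarrow> 0) F"
  proof (rule tendsto_0_le[OF b0, where K=2])
    show "eventually (\<lambda>R. norm (b R / (a R + b R)) \<le> norm (b R) * 2) F"
      using ev
    proof eventually_elim
      case (elim R)
      then have n: "norm (a R + b R) \<ge> 1/2" by linarith
      have "norm (b R) / norm (a R + b R) \<le> norm (b R) / (1/2)"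
        by (rule divide_left_mono) (use n in auto)
      then show ?case by (simp add: norm_divide)
    qed
  qed
  have "((\<lambda>R. 1 + b R / a R) \<longlongrightarrow> 1 + 0) F" by (intro tendsto_intros q1)
  moreover have "eventually (\<lambda>R. 1 + b R / a R = (a R + b R) / a R) F"
    using nz by eventually_elim (auto simp: field_simps)
  ultimately show "((\<lambda>R. (a R + b R) / a R) \<longlongrightarrow> 1) F"
    by (simp add: tendsto_cong)
  have "((\<lambda>R. 1 - b R / (a R + b R)) \<longlongrightarrow> 1 - 0) F" by (intro tendsto_intros q2)
  moreover have "eventually (\<lambda>R. 1 - b R / (a R + b R) = a R / (a R + b R)) F"
    using nz by eventually_elim (auto simp: field_simps)
  ultimately show "((\<lambda>R. a R / (a R + b R)) \<longlongrightarrow> 1) F"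
    by (simp add: tendsto_cong)
qed

lemma cmod_add_sq: "(cmod (a + b))\<^sup>2 = (cmod a)\<^sup>2 + 2 * Re (a * cnj b) + cmod b * cmod b"
proof -
  have "cmod b * cmod b = (cmod b)\<^sup>2" by (simp add: power2_eq_square)
  then show ?thesis by (simp only: cmod_power2) (simp add: power2_eq_square algebra_simps)
qed

lemma cin_int:
  assumes "L2 w" "L2 h"
  shows "integrable lborel (\<lambda>x. cinner (\<i> * w x) (h x))"
proof -
  have "integrable lborel (\<lambda>x. Re (\<i> * (w x * cnj (h x))))"
    by (intro integrable_Re integrable_mult_right L2_mult assms L2_cnj)
  moreover have "(\<lambda>x. Re (\<i> * (w x * cnj (h x)))) = (\<lambda>x. cinner (\<i> * w x) (h x))"
    by (auto simp: cinner_def fun_eq_iff mult_ac)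
  ultimately show ?thesis by simp
qed




theorem lemma4:
  fixes V0 w g0 g :: "real \<Rightarrow> complex"
  assumes "X1 V0" and "H1 w"
    and "weak_deriv V0 g0" and "weak_deriv w g"
  shows "X1 (\<lambda>x. V0 x + w x) \<and>
    (\<forall>p0. momentum_is V0 g0 p0 \<longrightarrow>
       momentum_is (\<lambda>x. V0 x + w x) (\<lambda>x. g0 x + g x)
         (p0 + (1/2) * (\<integral>x. cinner (\<i> * w x) (g x) \<partial>lborel)
             + (\<integral>x. cinner (\<i> * w x) (g0 x) \<partial>lborel)))"
proof -
  note X = assms(1) and H = assms(2) and dV = assms(3) and dw = assms(4)
  obtain h0 where h0: "weak_deriv V0 h0" "L2 h0" and bd0: "bounded (range V0)"
    and LQ0: "L2 (\<lambda>x. 1 - (norm (V0 x))\<^sup>2)" using X unfolding X1_def by blast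
  obtain h where h: "weak_deriv w h" "L2 h" and Lw: "L2 w" using H unfolding H1_def by blast
  have Lg0: "L2 g0" by (rule L2_AE[OF h0(2) wd_borel'[OF dV] wd_unique[OF h0(1) dV]])
  have Lg: "L2 g" by (rule L2_AE[OF h(2) wd_borel'[OF dw] wd_unique[OF h(1) dw]])
  obtain B0 where B0: "\<And>x. norm (V0 x) \<le> B0" using bd0 unfolding bounded_iff by blast
  note wlim = H1_lim[OF H]
  obtain Bw where Bw: "\<And>x. norm (w x) \<le> Bw" using bounded_of_lims[OF wd_cont[OF dw] wlim] by blast
  note V0lim = X1_lim[OF X]
  have Vm: "V0 \<in> borel_measurable borel" by (rule wd_borel[OF dV])
  have wm: "w \<in> borel_measurable borel" by (rule wd_borel[OF dw])
  have X1V: "X1 (\<lambda>x. V0 x + w x)"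
    unfolding X1_def
  proof (intro conjI)
    show "bounded (range (\<lambda>x. V0 x + w x))"
      unfolding bounded_iff
    proof (intro exI ballI)
      fix z assume "z \<in> range (\<lambda>x. V0 x + w x)"
      then obtain x where "z = V0 x + w x" by blast
      moreover have "norm (V0 x + w x) \<le> B0 + Bw" using norm_triangle_ineq[of "V0 x" "w x"] B0[of x] Bw[of x] by linarith
      ultimately show "norm z \<le> B0 + Bw" by simp
    qed
    show "\<exists>g'. weak_deriv (\<lambda>x. V0 x + w x) g' \<and> L2 g'"
      using wd_add[OF dV dw] L2_add[OF Lg0 Lg] by blast
    have A: "L2 (\<lambda>x. 2 * Re (V0 x * cnj (w x)))"
    proof -
      have "L2 (\<lambda>x. V0 x * cnj (w x))" by (rule L2_bmult[OF L2_cnj[OF Lw] Vm B0])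
      then have "L2 (\<lambda>x. Re (V0 x * cnj (w x)))" by (rule L2_Re)
      then show ?thesis by (rule L2_bmult[where B=2]) auto
    qed
    have B: "L2 (\<lambda>x. norm (w x) * norm (w x))"
      by (rule L2_bmult[OF L2_norm[OF Lw], where B=Bw]) (use wm Bw in auto)
    have "L2 (\<lambda>x. (1 - (norm (V0 x))\<^sup>2) + (- (2 * Re (V0 x * cnj (w x))) + - (norm (w x) * norm (w x))))"
      by (intro L2_add LQ0 L2_uminus A B)
    moreover have "(\<lambda>x. (1 - (norm (V0 x))\<^sup>2) + (- (2 * Re (V0 x * cnj (w x))) + - (norm (w x) * norm (w x))))
        = (\<lambda>x. 1 - (norm (V0 x + w x))\<^sup>2)"
      by (auto simp: fun_eq_iff cmod_add_sq)
    ultimately show "L2 (\<lambda>x. 1 - (norm (V0 x + w x))\<^sup>2)" by simp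
  qed
  define A2 where "A2 = (\<integral>x. cinner (\<i> * w x) (g0 x) \<partial>lborel)"
  define A3 where "A3 = (\<integral>x. cinner (\<i> * w x) (g x) \<partial>lborel)"
  define J2 where "J2 R = (\<integral>x. indicator {-R..R} x *\<^sub>R cinner (\<i> * w x) (g0 x) \<partial>lborel)" for R
  define J3 where "J3 R = (\<integral>x. indicator {-R..R} x *\<^sub>R cinner (\<i> * w x) (g x) \<partial>lborel)" for R
  define bR where "bR R = Re (\<i> * (V0 R * cnj (w R))) - Re (\<i> * (V0 (-R) * cnj (w (-R))))" for R
  define D where "D R = 2 * J2 R + J3 R + bR R" for R
  have J2l: "(J2 \<longlongrightarrow> A2) at_top"
    unfolding J2_def[abs_def] A2_def by (rule lim_sym_int[OF cin_int[OF Lw Lg0]])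
  have J3l: "(J3 \<longlongrightarrow> A3) at_top"
    unfolding J3_def[abs_def] A3_def by (rule lim_sym_int[OF cin_int[OF Lw Lg]])
  have P1: "((\<lambda>R. V0 R * cnj (w R)) \<longlongrightarrow> 0) at_top"
  proof (rule tendsto_0_le[OF wlim(1), where K=B0])
    show "eventually (\<lambda>R. norm (V0 R * cnj (w R)) \<le> norm (w R) * B0) at_top"
      by (intro always_eventually allI) (simp add: norm_mult mult_right_mono B0 mult.commute)
  qed
  have wlim2: "((\<lambda>R. w (-R)) \<longlongrightarrow> 0) at_top" using wlim(2) unfolding filterlim_at_bot_mirror .
  have P2: "((\<lambda>R. V0 (-R) * cnj (w (-R))) \<longlongrightarrow> 0) at_top"
  proof (rule tendsto_0_le[OF wlim2, where K=B0])
    show "eventually (\<lambda>R. norm (V0 (-R) * cnj (w (-R))) \<le> norm (w (-R)) * B0) at_top"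
      by (intro always_eventually allI) (simp add: norm_mult mult_right_mono B0 mult.commute)
  qed
  have bl: "(bR \<longlongrightarrow> 0) at_top"
  proof -
    have "((\<lambda>R. Re (\<i> * (V0 R * cnj (w R))) - Re (\<i> * (V0 (-R) * cnj (w (-R))))) \<longlongrightarrow> Re (\<i> * 0) - Re (\<i> * 0)) at_top"
      by (intro tendsto_intros P1 P2)
    then show ?thesis unfolding bR_def[abs_def] by simp
  qed
  have Dl: "(D \<longlongrightarrow> 2 * A2 + A3) at_top"
  proof -
    have "((\<lambda>R. 2 * J2 R + J3 R + bR R) \<longlongrightarrow> 2 * A2 + A3 + 0) at_top"
      by (intro tendsto_intros J2l J3l bl)
    then show ?thesis unfolding D_def[abs_def] by simp
  qed
  have V0lim2: "((\<lambda>R. norm (V0 (-R))) \<longlongrightarrow> 1) at_top" using V0lim(2) unfolding filterlim_at_bot_mirror .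
  note r1 = ratio_lims[OF V0lim(1) wlim(1)]
  note r2 = ratio_lims[OF V0lim2 wlim2]
  show ?thesis
  proof (intro conjI allI impI X1V)
    fix p0 assume "momentum_is V0 g0 p0"
    then have m0: "((\<lambda>R. cis (2 * pR V0 g0 R)) \<longlongrightarrow> cis (2 * p0)) at_top"
      unfolding momentum_is_def .
    have lim: "((\<lambda>R. cis (2 * pR V0 g0 R) * cis (D R) * sgn (V0 R / (V0 R + w R)) * sgn ((V0 (-R) + w (-R)) / V0 (-R)))
        \<longlongrightarrow> cis (2 * p0) * cis (2 * A2 + A3) * sgn 1 * sgn 1) at_top"
      by (intro tendsto_intros m0 Dl r1(1) r2(2)) auto
    have ev: "eventually (\<lambda>R. cis (2 * pR V0 g0 R) * cis (D R) * sgn (V0 R / (V0 R + w R)) * sgn ((V0 (-R) + w (-R)) / V0 (-R))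
        = cis (2 * pR (\<lambda>x. V0 x + w x) (\<lambda>x. g0 x + g x) R)) at_top"
      using r1(3) r2(3) eventually_ge_at_top[of 0]
    proof eventually_elim
      case (elim R)
      have sp: "(\<integral>x. indicator {-R..R} x *\<^sub>R cinner (\<i> * (V0 x + w x)) (g0 x + g x) \<partial>lborel)
         = (\<integral>x. indicator {-R..R} x *\<^sub>R cinner (\<i> * V0 x) (g0 x) \<partial>lborel) + D R"
        using split_int[OF dV dw, of "-R" R] elim by (simp add: D_def J2_def J3_def bR_def)
      have e1: "2 * pR (\<lambda>x. V0 x + w x) (\<lambda>x. g0 x + g x) R
          = 2 * pR V0 g0 R + D R + (Arg (V0 R) - Arg (V0 R + w R)) + (Arg (V0 (-R) + w (-R)) - Arg (V0 (-R)))"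
        unfolding pR_def set_lebesgue_integral_def sp by (simp add: algebra_simps)
      have "cis (2 * pR (\<lambda>x. V0 x + w x) (\<lambda>x. g0 x + g x) R)
          = cis (2 * pR V0 g0 R) * cis (D R) * (cis (Arg (V0 R)) / cis (Arg (V0 R + w R)))
              * (cis (Arg (V0 (-R) + w (-R))) / cis (Arg (V0 (-R))))"
        by (simp only: e1 cis_divide cis_mult)
      also have "\<dots> = cis (2 * pR V0 g0 R) * cis (D R) * (sgn (V0 R) / sgn (V0 R + w R))
              * (sgn (V0 (-R) + w (-R)) / sgn (V0 (-R)))"
        using elim by (simp add: cis_Arg)
      also have "\<dots> = cis (2 * pR V0 g0 R) * cis (D R) * sgn (V0 R / (V0 R + w R)) * sgn ((V0 (-R) + w (-R)) / V0 (-R))"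
        by (simp only: csgn_div)
      finally show ?case by simp
    qed
    have "((\<lambda>R. cis (2 * pR (\<lambda>x. V0 x + w x) (\<lambda>x. g0 x + g x) R)) \<longlongrightarrow> cis (2 * p0) * cis (2 * A2 + A3) * sgn 1 * sgn 1) at_top"
      by (rule Lim_transform_eventually[OF lim ev])
    moreover have "cis (2 * p0) * cis (2 * A2 + A3) * sgn 1 * sgn (1::complex) = cis (2 * (p0 + 1 / 2 * A3 + A2))"
      by (simp add: cis_mult algebra_simps)
    ultimately show "momentum_is (\<lambda>x. V0 x + w x) (\<lambda>x. g0 x + g x)
         (p0 + (1/2) * (\<integral>x. cinner (\<i> * w x) (g x) \<partial>lborel) + (\<integral>x. cinner (\<i> * w x) (g0 x) \<partial>lborel))"
      unfolding momentum_is_def A2_def A3_def by simp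
  qed
qed


end
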